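(* Let $D' \in \mathrm{Sym}_n(\mathbb{R}_{\geq 0})$ and let $D^A$ be the all pairs shortest path matrix of the complete weighted graph $K_n(D')$, i.e. $D^A_{ij}$ is the minimum total weight of a path from $i$ to $j$ in $K_n(D')$. Then the perturbation $P^A := D^A - D'$ is a sparsest possible decrease only metric repair solution for $D'$; that is, $P^A \preceq 0$, $D'+P^A$ is metric, and every $P \preceq 0$ with $D'+P$ metric satisfies $\|P^A\|_0 \leq \|P\|_0$. *)

theory Defs
  imports Complex_Main
begin

text \<open>n x n real matrices are functions on a finite index type 'n (n = CARD('n)).\<close>

definition sym_nonneg :: "('n::finite \<Rightarrow> 'n \<Rightarrow> real) \<Rightarrow> bool" where
  "sym_nonneg D \<longleftrightarrow> (\<forall>i j. D i j = D j i) \<and> (\<forall>i j. 0 \<le> D i j) \<and> (\<forall>i. D i i = 0)"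

definition is_metric :: "('n::finite \<Rightarrow> 'n \<Rightarrow> real) \<Rightarrow> bool" where
  "is_metric D \<longleftrightarrow> sym_nonneg D \<and> (\<forall>i j k. D i j \<le> D i k + D k j)"

definition paths :: "'n::finite \<Rightarrow> 'n \<Rightarrow> 'n list set" where
  "paths i j = {ps. ps \<noteq> [] \<and> hd ps = i \<and> last ps = j \<and> distinct ps}"

definition path_weight :: "('n \<Rightarrow> 'n \<Rightarrow> real) \<Rightarrow> 'n list \<Rightarrow> real" where
  "path_weight D ps = (\<Sum>(a, b)\<leftarrow>zip ps (tl ps). D a b)"

definition apsp :: "('n::finite \<Rightarrow> 'n \<Rightarrow> real) \<Rightarrow> 'n \<Rightarrow> 'n \<Rightarrow> real" where
  "apsp D i j = Min (path_weight D ` paths i j)"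

definition nonpos_mat :: "('n \<Rightarrow> 'n \<Rightarrow> real) \<Rightarrow> bool" where
  "nonpos_mat P \<longleftrightarrow> (\<forall>i j. P i j \<le> 0)"

definition norm0 :: "('n::finite \<Rightarrow> 'n \<Rightarrow> real) \<Rightarrow> nat" where
  "norm0 P = card {(i, j). P i j \<noteq> 0}"

end

theory Submission
  imports Defs
begin

lemma pw_single[simp]: "path_weight D [x] = 0"
  by (simp add: path_weight_def)

lemma pw_cons2[simp]: "path_weight D (x#y#r) = D x y + path_weight D (y#r)"
  by (simp add: path_weight_def)

lemma pw_append: "path_weight D (xs @ y # zs) = path_weight D (xs @ [y]) + path_weight D (y # zs)"
proof (induction xs)
  case Nil then show ?case by simp
next
  case (Cons x xs)
  then show ?case by (cases xs) auto
qed

lemma pw_nonneg: "(\<And>a b. 0 \<le> D a b) \<Longrightarrow> 0 \<le> path_weight D ps"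
  unfolding path_weight_def by (rule sum_list_nonneg) auto

lemma pw_rev:
  assumes sy: "\<And>a b. D a b = D b a"
  shows "path_weight D (rev ps) = path_weight D ps"
proof (induction ps)
  case Nil then show ?case by (simp add: path_weight_def)
next
  case (Cons x ps)
  note IH = Cons.IH
  show ?case
  proof (cases ps)
    case Nil then show ?thesis by simp
  next
    case (Cons a ps')
    have "path_weight D (rev (x#ps)) = path_weight D (rev ps' @ a # [x])"
      using Cons by simp
    also have "\<dots> = path_weight D (rev ps' @ [a]) + D a x" using pw_append[of D "rev ps'" a "[x]"] by simp
    also have "\<dots> = path_weight D (rev ps) + D x a" using Cons sy[of a x] by simp
    also have "\<dots> = path_weight D (x#ps)" using IH Cons by simp
    finally show ?thesis .
  qed
qed


lemma paths_finite: "finite (paths (i::'n::finite) j)"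
proof -
  have "paths i j \<subseteq> {xs. set xs \<subseteq> UNIV \<and> length xs \<le> card (UNIV::'n set)}"
  proof
    fix xs assume "xs \<in> paths i j"
    then have "distinct xs" unfolding paths_def by simp
    then have "length xs = card (set xs)" by (simp add: distinct_card)
    also have "\<dots> \<le> card (UNIV::'n set)" by (rule card_mono) auto
    finally show "xs \<in> {xs. set xs \<subseteq> UNIV \<and> length xs \<le> card (UNIV::'n set)}" by simp
  qed
  moreover have "finite {xs. set xs \<subseteq> (UNIV::'n set) \<and> length xs \<le> card (UNIV::'n set)}"
    by (rule finite_lists_length_le) simp
  ultimately show ?thesis by (rule finite_subset)
qed

lemma paths_ne: "paths i j \<noteq> {}"
proof (cases "i = j")
  case True then have "[i] \<in> paths i j" by (simp add: paths_def)
  then show ?thesis by blast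
next
  case False then have "[i,j] \<in> paths i j" by (simp add: paths_def)
  then show ?thesis by blast
qed

lemma apsp_le: "ps \<in> paths i j \<Longrightarrow> apsp D i j \<le> path_weight D ps"
  unfolding apsp_def using paths_finite by (intro Min_le) auto

lemma apsp_obtain: "\<exists>ps \<in> paths i j. apsp D i j = path_weight D ps"
proof -
  have "apsp D i j \<in> path_weight D ` paths i j"
    unfolding apsp_def using paths_finite paths_ne by (intro Min_in) auto
  then show ?thesis by auto
qed

lemma walk_shorten:
  assumes nn: "\<And>a b. 0 \<le> D a b"
  shows "ps \<noteq> [] \<Longrightarrow> apsp D (hd ps) (last ps) \<le> path_weight D ps"
proof (induction ps rule: length_induct)
  case (1 ps)
  show ?case
  proof (cases "distinct ps")
    case True
    then have "ps \<in> paths (hd ps) (last ps)" using 1 by (simp add: paths_def)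
    then show ?thesis by (rule apsp_le)
  next
    case False
    then obtain xs y ys zs where ps: "ps = xs @ [y] @ ys @ [y] @ zs"
      using not_distinct_decomp by blast
    define ps' where "ps' = xs @ y # zs"
    have len: "length ps' < length ps" using ps ps'_def by simp
    have hd: "hd ps' = hd ps" using ps ps'_def by (cases xs) auto
    have lst: "last ps' = last ps" using ps ps'_def by (cases zs) auto
    have "path_weight D ps = path_weight D (xs @ [y]) + path_weight D (y # ys @ y # zs)"
      using ps pw_append[of D xs y "ys @ y # zs"] by simp
    also have "path_weight D (y # ys @ y # zs) = path_weight D ((y # ys) @ [y]) + path_weight D (y # zs)"
      using pw_append[of D "y#ys" y zs] by simp
    finally have "path_weight D ps' \<le> path_weight D ps"
      using pw_nonneg[OF nn, where ps="(y # ys) @ [y]"] ps'_def pw_append[of D xs y zs] by simp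
    moreover have "apsp D (hd ps') (last ps') \<le> path_weight D ps'"
      using 1 len unfolding ps'_def by (metis Nil_is_append_conv list.distinct(1))
    ultimately show ?thesis using hd lst by simp
  qed
qed

lemma metric_path:
  assumes tri: "\<And>i j k. M i j \<le> M i k + M k j" and z: "\<And>i. M i i = 0"
  shows "ps \<noteq> [] \<Longrightarrow> M (hd ps) (last ps) \<le> path_weight M ps"
proof (induction ps)
  case Nil then show ?case by simp
next
  case (Cons x ps)
  show ?case
  proof (cases ps)
    case Nil then show ?thesis using z by simp
  next
    case (Cons a ps')
    have "M x (last ps) \<le> M x a + M a (last ps)" by (rule tri)
    then show ?thesis using Cons.IH Cons by simp
  qed
qed

theorem mainTheorem1:
  fixes D' :: "'n::finite \<Rightarrow> 'n \<Rightarrow> real"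
  assumes "sym_nonneg D'"
  defines "PA \<equiv> (\<lambda>i j. apsp D' i j - D' i j)"
  shows "nonpos_mat PA \<and> is_metric (\<lambda>i j. D' i j + PA i j) \<and>
         (\<forall>P. nonpos_mat P \<and> is_metric (\<lambda>i j. D' i j + P i j) \<longrightarrow> norm0 PA \<le> norm0 P)"
proof -
  have sym: "\<And>i j. D' i j = D' j i" and nn: "\<And>i j. 0 \<le> D' i j" and dz: "\<And>i. D' i i = 0"
    using assms(1) unfolding sym_nonneg_def by auto
  have le: "apsp D' i j \<le> D' i j" for i j
  proof (cases "i = j")
    case True
    then have "[i] \<in> paths i j" by (simp add: paths_def)
    then show ?thesis using apsp_le[of "[i]" i j D'] True dz by simp
  next
    case False
    then have "[i,j] \<in> paths i j" by (simp add: paths_def)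
    then show ?thesis using apsp_le[of "[i,j]" i j D'] by simp
  qed
  have A_nn: "0 \<le> apsp D' i j" for i j
    using apsp_obtain[of i j D'] pw_nonneg[OF nn] by auto
  have A_z: "apsp D' i i = 0" for i using le[of i i] A_nn[of i i] dz by simp
  have A_sym1: "apsp D' j i \<le> apsp D' i j" for i j
  proof -
    obtain p where p: "p \<in> paths i j" "apsp D' i j = path_weight D' p"
      using apsp_obtain by blast
    have "rev p \<in> paths j i" using p(1) by (auto simp: paths_def hd_rev last_rev)
    then have "apsp D' j i \<le> path_weight D' (rev p)" by (rule apsp_le)
    then show ?thesis using p pw_rev[of D' p] sym by simp
  qed
  have A_sym: "apsp D' i j = apsp D' j i" for i j using A_sym1[of i j] A_sym1[of j i] by simp
  have A_tri: "apsp D' i j \<le> apsp D' i k + apsp D' k j" for i j k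
  proof -
    obtain p where p: "p \<in> paths i k" "apsp D' i k = path_weight D' p"
      using apsp_obtain by blast
    obtain q where q: "q \<in> paths k j" "apsp D' k j = path_weight D' q"
      using apsp_obtain by blast
    have pp: "p \<noteq> []" "last p = k" "hd p = i" using p(1) unfolding paths_def by auto
    have qq: "q \<noteq> []" "hd q = k" "last q = j" using q(1) unfolding paths_def by auto
    define p' where "p' = butlast p"
    define q' where "q' = tl q"
    have p': "p = p' @ [k]" unfolding p'_def using pp append_butlast_last_id[of p] by simp
    have q': "q = k # q'" unfolding q'_def using qq list.collapse[of q] by simp
    have w: "path_weight D' (p' @ k # q') = path_weight D' p + path_weight D' q"
      using pw_append[of D' p' k q'] p' q' by simp
    have "hd (p' @ k # q') = i" using pp p' by (cases p') auto
    moreover have "last (p' @ k # q') = j" using qq q' by (cases q') auto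
    ultimately have "apsp D' i j \<le> path_weight D' (p' @ k # q')"
      using walk_shorten[OF nn, of "p' @ k # q'"] by simp
    then show ?thesis using w p q by simp
  qed
  have part1: "nonpos_mat PA" unfolding nonpos_mat_def PA_def using le by simp
  have part2: "is_metric (\<lambda>i j. D' i j + PA i j)"
    unfolding is_metric_def sym_nonneg_def PA_def using A_nn A_z A_sym A_tri by simp
  have part3: "norm0 PA \<le> norm0 P" if P: "nonpos_mat P" "is_metric (\<lambda>i j. D' i j + P i j)" for P
  proof -
    define M where "M = (\<lambda>i j. D' i j + P i j)"
    have tri: "\<And>i j k. M i j \<le> M i k + M k j" and mz: "\<And>i. M i i = 0"
      using P(2) unfolding M_def is_metric_def sym_nonneg_def by auto
    have Mle: "M i j \<le> apsp D' i j" for i j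
    proof -
      obtain p where p: "p \<in> paths i j" "apsp D' i j = path_weight D' p"
        using apsp_obtain by blast
      have "M i j \<le> path_weight M p"
        using metric_path[OF tri mz, of p] p(1) unfolding paths_def by auto
      also have "\<dots> \<le> path_weight D' p"
        unfolding path_weight_def
        by (rule sum_list_mono) (use P(1) in \<open>auto simp: M_def nonpos_mat_def\<close>)
      finally show ?thesis using p by simp
    qed
    have "{(i, j). PA i j \<noteq> 0} \<subseteq> {(i, j). P i j \<noteq> 0}"
    proof clarify
      fix i j assume "PA i j \<noteq> 0" "P i j = 0"
      then show False using Mle[of i j] le[of i j] unfolding M_def PA_def by simp
    qed
    then show ?thesis unfolding norm0_def by (rule card_mono[rotated]) simp
  qed
  show ?thesis using part1 part2 part3 by blast
qed

end
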